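(* Let $\mathcal{C}$ be a $(v,w,\lambda_a,\lambda_c)$-OOC with $|\mathcal{C}|\ge 2$. Then $\lambda_c\ge w^2/v$.
   Context: Let $v\ge 2$, $w\ge 1$, $\lambda_a,\lambda_c\ge 0$ be integers. A family $\mathcal{C}=\{X_0,\dots,X_{N-1}\}$ ($N\ge1$) of binary sequences of length $v$ and weight $w$ (number of ones) is a $(v,w,\lambda_a,\lambda_c)$-optical orthogonal code (OOC) if, writing $X=(x_t)_{t=0}^{v-1}$, $Y=(y_t)_{t=0}^{v-1}$ with indices mod $v$: (i) $\sum_{t=0}^{v-1}x_tx_{t+\delta}\le\lambda_a$ for every $X\in\mathcal{C}$ and $0<\delta\le v-1$; and (ii) $\sum_{t=0}^{v-1}x_ty_{t+\delta}\le\lambda_c$ for all distinct $X,Y\in\mathcal{C}$ and all $0\le\delta\le v-1$. *)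

theory Defs
  imports Complex_Main "HOL-Library.FuncSet"
begin

text \<open>A binary sequence of length v is represented as a function nat => bool,
  of which only the values at 0..v-1 are relevant; indices are taken mod v.\<close>

definition weight :: "nat \<Rightarrow> (nat \<Rightarrow> bool) \<Rightarrow> nat" where
  "weight v X = card {t. t < v \<and> X t}"

definition corr :: "nat \<Rightarrow> (nat \<Rightarrow> bool) \<Rightarrow> (nat \<Rightarrow> bool) \<Rightarrow> nat \<Rightarrow> nat" where
  "corr v X Y \<delta> = card {t. t < v \<and> X t \<and> Y ((t + \<delta>) mod v)}"

definition is_OOC :: "nat \<Rightarrow> nat \<Rightarrow> nat \<Rightarrow> nat \<Rightarrow> nat \<Rightarrow> (nat \<Rightarrow> nat \<Rightarrow> bool) \<Rightarrow> bool" where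
  "is_OOC v w la lc N X \<longleftrightarrow>
     2 \<le> v \<and> 1 \<le> w \<and> 1 \<le> N \<and>
     (\<forall>i<N. weight v (X i) = w) \<and>
     (\<forall>i<N. \<forall>\<delta>. 0 < \<delta> \<and> \<delta> \<le> v - 1 \<longrightarrow> corr v (X i) (X i) \<delta> \<le> la) \<and>
     (\<forall>i<N. \<forall>j<N. i \<noteq> j \<longrightarrow> (\<forall>\<delta>. \<delta> \<le> v - 1 \<longrightarrow> corr v (X i) (X j) \<delta> \<le> lc))"

end

theory Submission imports Defs begin
lemma inj_shift0: assumes "(t + d) mod v = (t + d') mod (v::nat)" "d \<le> d'" "d' < v" shows "d = d'"
proof -
  have "v dvd (t + d') - (t + d)" using assms(1,2) by (subst mod_eq_dvd_iff_nat[symmetric]) auto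
  hence "v dvd d' - d" by simp
  
  show ?thesis
  proof (rule ccontr)
    assume "d \<noteq> d'"
    hence "0 < d' - d" using assms(2) by simp
    hence "v \<le> d' - d" using \<open>v dvd d' - d\<close> by (rule dvd_imp_le[rotated])
    thus False using assms(3) by simp
  qed
qed

lemma inj_shift: assumes "(t + d) mod v = (t + d') mod (v::nat)" "d < v" "d' < v" shows "d = d'"
proof (cases "d \<le> d'")
  case True
  then show ?thesis using inj_shift0[OF assms(1) True assms(3)] by simp
next
  case False
  hence "d' \<le> d" by simp
  from inj_shift0[OF assms(1)[symmetric] this assms(2)] show ?thesis by simp
qed

lemma bij_shift: "bij_betw (\<lambda>d. (t + d) mod v) {..<v} {..<(v::nat)}"
proof -
  have i: "inj_on (\<lambda>d. (t + d) mod v) {..<v}"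
  proof (rule inj_onI)
    fix x y assume "x \<in> {..<v}" "y \<in> {..<v}" "(t + x) mod v = (t + y) mod v"
    thus "x = y" using inj_shift[of t x v y] by simp
  qed
  have s: "(\<lambda>d. (t + d) mod v) ` {..<v} \<subseteq> {..<v}"
  proof
    fix z assume "z \<in> (\<lambda>d. (t + d) mod v) ` {..<v}"
    then obtain d where "d < v" "z = (t + d) mod v" by auto
    thus "z \<in> {..<v}" by simp
  qed
  have "(\<lambda>d. (t + d) mod v) ` {..<v} = {..<v}" by (rule endo_inj_surj[OF finite_lessThan s i])
  thus ?thesis using i by (simp add: bij_betw_def)
qed

lemma card_ind: "card {t. t < (v::nat) \<and> P t} = (\<Sum>t<v. if P t then 1 else (0::nat))"
proof -
  have e: "{t. t < v \<and> P t} = {t \<in> {..<v}. P t}" by auto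
  have "card {t \<in> {..<v}. P t} = (\<Sum>t\<in>{t \<in> {..<v}. P t}. (1::nat))" by (rule card_eq_sum)
  also have "\<dots> = (\<Sum>t<v. if P t then 1 else (0::nat))" by (rule sum.inter_filter) simp
  finally show ?thesis unfolding e .
qed

lemma corr_sum: "(\<Sum>d<v. corr v X Y d) = weight v X * weight v Y"
proof -
  have "(\<Sum>d<v. corr v X Y d) = (\<Sum>d<v. \<Sum>t<v. if X t then (if Y ((t+d) mod v) then 1 else 0) else 0)"
    unfolding corr_def card_ind by (intro sum.cong) auto
  also have "\<dots> = (\<Sum>t<v. if X t then (\<Sum>d<v. if Y ((t+d) mod v) then 1 else 0) else 0)"
    by (subst sum.swap) (auto intro!: sum.cong)
  also have "\<dots> = (\<Sum>t<v. if X t then weight v Y else 0)"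
  proof (intro sum.cong refl)
    fix t
    have "(\<Sum>d<v. if Y ((t+d) mod v) then 1 else (0::nat)) = (\<Sum>s<v. if Y s then 1 else 0)"
      using sum.reindex_bij_betw[OF bij_shift[of t v], of "\<lambda>s. if Y s then 1 else (0::nat)"] by simp
    thus "(if X t then (\<Sum>d<v. if Y ((t+d) mod v) then 1 else 0) else 0) = (if X t then weight v Y else 0)"
      unfolding weight_def card_ind by simp
  qed
  also have "\<dots> = weight v X * weight v Y"
  proof -
    have "(\<Sum>t<v. if X t then weight v Y else 0) = (\<Sum>t<v. (if X t then 1 else 0) * weight v Y)"
      by (rule sum.cong) auto
    also have "\<dots> = (\<Sum>t<v. if X t then 1 else 0) * weight v Y" by (rule sum_distrib_right[symmetric])
    also have "\<dots> = weight v X * weight v Y" unfolding weight_def card_ind ..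
    finally show ?thesis .
  qed
  finally show ?thesis .
qed

theorem proposition5p2:
  fixes v w la lc N :: nat and X :: "nat \<Rightarrow> nat \<Rightarrow> bool"
  assumes "is_OOC v w la lc N X"
    and "card ((\<lambda>i. restrict (X i) {..<v}) ` {..<N}) \<ge> 2"
  shows "real lc \<ge> real w ^ 2 / real v"
proof -
  have "2 \<le> N"
  proof (rule ccontr)
    assume "\<not> 2 \<le> N"
    hence "card ((\<lambda>i. restrict (X i) {..<v}) ` {..<N}) \<le> 1"
      using card_image_le[of "{..<N}" "\<lambda>i. restrict (X i) {..<v}"] by simp
    thus False using assms(2) by simp
  qed
  have v: "2 \<le> v" using assms(1) unfolding is_OOC_def by simp
  have w0: "weight v (X 0) = w" and w1: "weight v (X 1) = w"
    using assms(1) \<open>2 \<le> N\<close> unfolding is_OOC_def by auto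
  have le: "\<And>d. d < v \<Longrightarrow> corr v (X 0) (X 1) d \<le> lc"
    using assms(1) \<open>2 \<le> N\<close> unfolding is_OOC_def by auto
  have "w * w = (\<Sum>d<v. corr v (X 0) (X 1) d)" using corr_sum w0 w1 by simp
  also have "\<dots> \<le> (\<Sum>d<v. lc)" by (intro sum_mono le) simp
  finally have "w * w \<le> v * lc" by simp
  hence "real (w * w) \<le> real (v * lc)" by (simp only: of_nat_le_iff)
  hence h: "real w ^ 2 \<le> real lc * real v" by (simp add: power2_eq_square algebra_simps)
  have "real v > 0" using v by simp
  thus ?thesis using h by (simp add: divide_le_eq)
qed
end
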